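(* Let $n\le d$, let $\{u_i\}_{i=1}^n$ be an orthonormal family in $\mathbb{C}^d$, let $\{e_i\}$ be the standard basis of $\mathbb{C}^n$, and let $K=\sum_{i=1}^n|e_i\rangle\langle u_i\otimes\overline{u_i}|$. If $\rho$ is a PPT bipartite PSD matrix on $\mathbb{C}^d\otimes\mathbb{C}^d$ whose range is contained in the symmetric subspace $\mathbb{C}^d\vee\mathbb{C}^d$, then $Z^\Gamma_K(\rho)=K\rho^\Gamma K^*\in\mathsf{DNN}_n$.
   Context: $\rho^\Gamma$ is the partial transpose on the second factor (standard basis), $\overline{u}$ is entrywise complex conjugation, and $\rho$ is PPT if $\rho\ge0$ and $\rho^\Gamma\ge0$. The symmetric subspace $\mathbb{C}^d\vee\mathbb{C}^d$ is the $+1$ eigenspace of the flip operator $F=\sum_{i,j}|ij\rangle\langle ji|$; range in it is equivalent to $\rho F=F\rho=\rho$. $\mathsf{DNN}_n=\mathcal{M}_n^+\cap\mathcal{M}_n(\mathbb{R}_+)$ is the cone of doubly nonnegative matrices (PSD with entrywise nonnegative entries). *)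

theory Defs
  imports "HOL-Analysis.Analysis"
begin

text \<open>Matrices are type-indexed: a square matrix on C^m is complex^'m^'m.
  The bipartite space C^d (x) C^d is indexed by 'd \<times> 'd, with |ij> the basis vector at (i,j).\<close>

definition cmat_adj :: "complex^'m::finite^'n::finite \<Rightarrow> complex^'n^'m" where
  "cmat_adj A = (\<chi> i j. cnj (A $ j $ i))"

definition cmat_psd :: "complex^'m::finite^'m \<Rightarrow> bool" where
  "cmat_psd A \<longleftrightarrow> (\<forall>i j. A $ i $ j = cnj (A $ j $ i)) \<and>
     (\<forall>x::complex^'m. 0 \<le> Re (\<Sum>i\<in>UNIV. cnj (x $ i) * (\<Sum>j\<in>UNIV. A $ i $ j * x $ j)))"

definition partial_transpose :: "complex^('d::finite\<times>'d)^('d::finite\<times>'d) \<Rightarrow> complex^('d::finite\<times>'d)^('d::finite\<times>'d)" where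
  "partial_transpose \<rho> = (\<chi> p q. \<rho> $ (fst p, snd q) $ (fst q, snd p))"

definition is_PPT :: "complex^('d::finite\<times>'d)^('d::finite\<times>'d) \<Rightarrow> bool" where
  "is_PPT \<rho> \<longleftrightarrow> cmat_psd \<rho> \<and> cmat_psd (partial_transpose \<rho>)"

definition flip_op :: "complex^('d::finite\<times>'d)^('d::finite\<times>'d)" where
  "flip_op = (\<chi> p q. if fst p = snd q \<and> snd p = fst q then 1 else 0)"

definition sym_subspace :: "(complex^('d::finite\<times>'d)) set" where
  "sym_subspace = {v. flip_op *v v = v}"

definition DNN :: "complex^'n::finite^'n \<Rightarrow> bool" where
  "DNN A \<longleftrightarrow> cmat_psd A \<and> (\<forall>i j. Im (A $ i $ j) = 0 \<and> 0 \<le> Re (A $ i $ j))"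

definition cinner :: "complex^'d::finite \<Rightarrow> complex^'d \<Rightarrow> complex" where
  "cinner x y = (\<Sum>a\<in>UNIV. cnj (x $ a) * y $ a)"

text \<open>K = sum_i |e_i><u_i (x) conj u_i|, so K_{i,(a,b)} = conj(u_i(a) * conj(u_i(b))).\<close>
definition K_op :: "('n::finite \<Rightarrow> complex^'d) \<Rightarrow> complex^('d::finite\<times>'d)^'n" where
  "K_op u = (\<chi> i p. cnj ((u i) $ fst p * cnj ((u i) $ snd p)))"

end

theory Submission
  imports Defs
begin

lemma cong_entry:
  fixes A :: "complex^'k::finite^'n::finite" and B :: "complex^'k^'k"
  shows "(A ** B ** cmat_adj A) $ i $ j = (\<Sum>p\<in>UNIV. \<Sum>q\<in>UNIV. A$i$p * B$p$q * cnj (A$j$q))"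
proof -
  have "(A ** B ** cmat_adj A) $ i $ j = (\<Sum>q\<in>UNIV. (\<Sum>p\<in>UNIV. A$i$p * B$p$q) * cnj (A$j$q))"
    by (simp add: matrix_matrix_mult_def cmat_adj_def)
  also have "\<dots> = (\<Sum>q\<in>UNIV. \<Sum>p\<in>UNIV. A$i$p * B$p$q * cnj (A$j$q))"
    by (simp add: sum_distrib_right)
  also have "\<dots> = (\<Sum>p\<in>UNIV. \<Sum>q\<in>UNIV. A$i$p * B$p$q * cnj (A$j$q))"
    by (rule sum.swap)
  finally show ?thesis .
qed

lemma cnj_fix:
  fixes z :: complex
  assumes "cnj z = z"
  shows "Im z = 0"
proof -
  have "Im (cnj z) = Im z" using assms by simp
  then show ?thesis by simp
qed

lemma herm_quad_real:
  fixes B :: "complex^'k::finite^'k"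
  assumes "\<forall>i j. B $ i $ j = cnj (B $ j $ i)"
  shows "Im (\<Sum>i\<in>UNIV. cnj (x $ i) * (\<Sum>j\<in>UNIV. B $ i $ j * x $ j)) = 0"
proof -
  let ?q = "(\<Sum>i\<in>UNIV. cnj (x $ i) * (\<Sum>j\<in>UNIV. B $ i $ j * x $ j))"
  have "cnj ?q = (\<Sum>i\<in>UNIV. \<Sum>j\<in>UNIV. x $ i * (B $ j $ i * cnj (x $ j)))"
  proof -
    have Hc: "cnj (B $ i $ j) = B $ j $ i" for i j
    proof -
      have "B $ j $ i = cnj (B $ i $ j)" using assms by blast
      then show ?thesis by simp
    qed
    show ?thesis by (simp add: sum_distrib_left Hc)
  qed
  also have "\<dots> = (\<Sum>j\<in>UNIV. \<Sum>i\<in>UNIV. x $ i * (B $ j $ i * cnj (x $ j)))"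
    by (rule sum.swap)
  also have "\<dots> = ?q"
    by (simp add: sum_distrib_left mult.commute mult.left_commute)
  finally have "cnj ?q = ?q" .
  then show ?thesis by (rule cnj_fix)
qed

lemma cong_psd:
  fixes A :: "complex^'k::finite^'n::finite" and B :: "complex^'k^'k"
  assumes "cmat_psd B"
  shows "cmat_psd (A ** B ** cmat_adj A)"
proof -
  have H: "\<forall>i j. B $ i $ j = cnj (B $ j $ i)" using assms cmat_psd_def by blast
  have "(A ** B ** cmat_adj A) $ i $ j = cnj ((A ** B ** cmat_adj A) $ j $ i)" for i j
  proof -
    have "cnj ((A ** B ** cmat_adj A) $ j $ i) = (\<Sum>p\<in>UNIV. \<Sum>q\<in>UNIV. cnj (A$j$p) * B$q$p * A$i$q)"
    proof -
      have Hc: "cnj (B $ i $ j) = B $ j $ i" for i j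
      proof -
        have "B $ j $ i = cnj (B $ i $ j)" using H by blast
        then show ?thesis by simp
      qed
      show ?thesis unfolding cong_entry by (simp only: cnj_sum) (intro sum.cong refl, simp add: Hc ac_simps)
    qed
    also have "\<dots> = (\<Sum>q\<in>UNIV. \<Sum>p\<in>UNIV. cnj (A$j$p) * B$q$p * A$i$q)" by (rule sum.swap)
    also have "\<dots> = (A ** B ** cmat_adj A) $ i $ j"
      unfolding cong_entry by (intro sum.cong refl) (simp add: ac_simps)
    finally show ?thesis by (rule sym)
  qed
  moreover have "0 \<le> Re (\<Sum>i\<in>UNIV. cnj (x $ i) * (\<Sum>j\<in>UNIV. (A ** B ** cmat_adj A) $ i $ j * x $ j))" for x
  proof -
    define z where "z = (\<chi> p. \<Sum>j\<in>UNIV. cnj (A$j$p) * x$j)"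
    have "(\<Sum>i\<in>UNIV. cnj (x $ i) * (\<Sum>j\<in>UNIV. (A ** B ** cmat_adj A) $ i $ j * x $ j))
       = (\<Sum>i\<in>UNIV. \<Sum>j\<in>UNIV. \<Sum>p\<in>UNIV. \<Sum>q\<in>UNIV. cnj (x $ i) * A$i$p * B$p$q * cnj (A$j$q) * x $ j)"
      unfolding cong_entry sum_distrib_left sum_distrib_right by (intro sum.cong refl) (simp add: ac_simps)
    also have "\<dots> = (\<Sum>i\<in>UNIV. \<Sum>p\<in>UNIV. \<Sum>j\<in>UNIV. \<Sum>q\<in>UNIV. cnj (x $ i) * A$i$p * B$p$q * cnj (A$j$q) * x $ j)"
      by (rule sum.cong[OF refl], rule sum.swap)
    also have "\<dots> = (\<Sum>i\<in>UNIV. \<Sum>p\<in>UNIV. \<Sum>q\<in>UNIV. \<Sum>j\<in>UNIV. cnj (x $ i) * A$i$p * B$p$q * cnj (A$j$q) * x $ j)"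
      by (rule sum.cong[OF refl], rule sum.cong[OF refl], rule sum.swap)
    also have "\<dots> = (\<Sum>p\<in>UNIV. \<Sum>i\<in>UNIV. \<Sum>q\<in>UNIV. \<Sum>j\<in>UNIV. cnj (x $ i) * A$i$p * B$p$q * cnj (A$j$q) * x $ j)"
      by (rule sum.swap)
    also have "\<dots> = (\<Sum>p\<in>UNIV. \<Sum>q\<in>UNIV. \<Sum>i\<in>UNIV. \<Sum>j\<in>UNIV. cnj (x $ i) * A$i$p * B$p$q * cnj (A$j$q) * x $ j)"
      by (rule sum.cong[OF refl], rule sum.swap)
    also have "\<dots> = (\<Sum>p\<in>UNIV. \<Sum>q\<in>UNIV. \<Sum>j\<in>UNIV. \<Sum>i\<in>UNIV. cnj (x $ i) * A$i$p * B$p$q * cnj (A$j$q) * x $ j)"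
      by (rule sum.cong[OF refl], rule sum.cong[OF refl], rule sum.swap)
    also have "\<dots> = (\<Sum>p\<in>UNIV. cnj (z $ p) * (\<Sum>q\<in>UNIV. B $ p $ q * z $ q))"
      unfolding z_def by (simp add: sum_distrib_left sum_distrib_right mult.commute mult.left_commute)
    finally have eq: "(\<Sum>i\<in>UNIV. cnj (x $ i) * (\<Sum>j\<in>UNIV. (A ** B ** cmat_adj A) $ i $ j * x $ j))
       = (\<Sum>p\<in>UNIV. cnj (z $ p) * (\<Sum>q\<in>UNIV. B $ p $ q * z $ q))" .
    have "0 \<le> Re (\<Sum>p\<in>UNIV. cnj (z $ p) * (\<Sum>q\<in>UNIV. B $ p $ q * z $ q))"
      using assms unfolding cmat_psd_def by blast
    then show ?thesis unfolding eq .
  qed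
  ultimately show ?thesis unfolding cmat_psd_def by blast
qed

lemma flip_apply:
  fixes v :: "complex^('d::finite\<times>'d)"
  shows "(flip_op *v v) $ (a, b) = (\<Sum>j\<in>UNIV. if j = (b, a) then v $ j else 0)"
  unfolding matrix_vector_mult_def flip_op_def
  by (simp only: vec_lambda_beta, intro sum.cong refl) (auto simp: prod_eq_iff)

lemma flip_entry:
  fixes \<rho> :: "complex^('d::finite\<times>'d)^('d\<times>'d)"
  assumes "range (\<lambda>x. \<rho> *v x) \<subseteq> sym_subspace"
  shows "\<rho> $ (b, a) $ q = \<rho> $ (a, b) $ q"
proof -
  let ?v = "\<rho> *v axis q 1"
  have "flip_op *v ?v = ?v" using assms unfolding sym_subspace_def by auto
  then have "(flip_op *v ?v) $ (a, b) = ?v $ (a, b)" by simp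
  moreover have "(flip_op *v ?v) $ (a, b) = ?v $ (b, a)"
  proof -
    have "(flip_op *v ?v) $ (a, b) = (\<Sum>j\<in>UNIV. if j = (b, a) then ?v $ j else 0)"
      by (rule flip_apply)
    also have "\<dots> = ?v $ (b, a)" by simp
    finally show ?thesis .
  qed
  moreover have "?v $ p = \<rho> $ p $ q" for p
    unfolding matrix_vector_mult_def axis_def by (simp add: if_distrib cong: if_cong)
  ultimately show ?thesis by simp
qed

theorem mainTheorem11:
  fixes u :: "'n::finite \<Rightarrow> complex^'d::finite"
    and \<rho> :: "complex^('d\<times>'d)^('d\<times>'d)"
  assumes "CARD('n) \<le> CARD('d)"
    and "\<forall>i j. cinner (u i) (u j) = (if i = j then 1 else 0)"
    and "is_PPT \<rho>"
    and "range (\<lambda>x. \<rho> *v x) \<subseteq> sym_subspace"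
  shows "DNN (K_op u ** partial_transpose \<rho> ** cmat_adj (K_op u))"
proof -
  let ?M = "K_op u ** partial_transpose \<rho> ** cmat_adj (K_op u)"
  have psd: "cmat_psd \<rho>" and ppsd: "cmat_psd (partial_transpose \<rho>)"
    using assms(3) unfolding is_PPT_def by auto
  have H: "\<forall>i j. \<rho> $ i $ j = cnj (\<rho> $ j $ i)" using psd cmat_psd_def by blast
  have entry: "?M $ i $ j = (\<Sum>p\<in>UNIV. cnj (y $ p) * (\<Sum>q\<in>UNIV. \<rho> $ p $ q * y $ q))"
    if yd: "y = (\<chi> p. u j $ fst p * u i $ snd p)" for i j y
  proof -
    define f where "f = (\<lambda>(p::'d\<times>'d, q::'d\<times>'d). K_op u $ i $ p * partial_transpose \<rho> $ p $ q * cnj (K_op u $ j $ q))"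
    define g where "g = (\<lambda>(p::'d\<times>'d, q::'d\<times>'d). cnj (y $ p) * \<rho> $ p $ q * y $ q)"
    have "?M $ i $ j = (\<Sum>p\<in>UNIV. \<Sum>q\<in>UNIV. f (p, q))"
      unfolding cong_entry f_def by simp
    also have "\<dots> = (\<Sum>x\<in>UNIV \<times> UNIV. f x)"
      by (subst sum.cartesian_product) simp
    also have "\<dots> = (\<Sum>x\<in>UNIV \<times> UNIV. g x)"
    proof (rule sum.reindex_bij_witness[where j = "\<lambda>(p, q). ((snd q, fst p), (fst q, snd p))"
          and i = "\<lambda>(p, q). ((snd p, snd q), (fst q, fst p))"])
      fix x :: "('d\<times>'d)\<times>('d\<times>'d)"
      obtain a b c d where x: "x = ((a, b), (c, d))" by (metis prod.exhaust)
      have "\<rho> $ (d, a) $ (c, b) = \<rho> $ (a, d) $ (c, b)" by (rule flip_entry[OF assms(4)])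
      then show "g (case x of (p, q) \<Rightarrow> ((snd q, fst p), fst q, snd p)) = f x"
      proof -
        have g1: "g ((d, a), (c, b)) = cnj (u j $ d * u i $ a) * \<rho> $ (d, a) $ (c, b) * (u j $ c * u i $ b)"
          unfolding g_def yd by simp
        have f1: "f ((a, b), (c, d)) = cnj (u i $ a * cnj (u i $ b)) * \<rho> $ (a, d) $ (c, b) * (u j $ c * cnj (u j $ d))"
          unfolding f_def K_op_def partial_transpose_def by simp
        have alg: "cnj (\<alpha> * \<beta>) * R * (\<gamma> * \<delta>) = cnj (\<beta> * cnj \<delta>) * R * (\<gamma> * cnj \<alpha>)"
          for \<alpha> \<beta> \<gamma> \<delta> R :: complex by (simp add: algebra_simps)
        have "g (case x of (p, q) \<Rightarrow> ((snd q, fst p), fst q, snd p)) = g ((d, a), (c, b))"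
          unfolding x by simp
        also have "\<dots> = cnj (u j $ d * u i $ a) * \<rho> $ (d, a) $ (c, b) * (u j $ c * u i $ b)"
          by (rule g1)
        also have "\<dots> = cnj (u i $ a * cnj (u i $ b)) * \<rho> $ (d, a) $ (c, b) * (u j $ c * cnj (u j $ d))"
          by (rule alg)
        also have "\<dots> = cnj (u i $ a * cnj (u i $ b)) * \<rho> $ (a, d) $ (c, b) * (u j $ c * cnj (u j $ d))"
          by (simp only: \<open>\<rho> $ (d, a) $ (c, b) = \<rho> $ (a, d) $ (c, b)\<close>)
        also have "\<dots> = f x"
          unfolding x by (rule f1[symmetric])
        finally show ?thesis .
      qed
    qed auto
    also have "\<dots> = (\<Sum>p\<in>UNIV. \<Sum>q\<in>UNIV. g (p, q))"
      by (subst sum.cartesian_product) simp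
    also have "\<dots> = (\<Sum>p\<in>UNIV. cnj (y $ p) * (\<Sum>q\<in>UNIV. \<rho> $ p $ q * y $ q))"
      unfolding g_def by (simp add: sum_distrib_left mult.assoc)
    finally show ?thesis .
  qed
  have "Im (?M $ i $ j) = 0 \<and> 0 \<le> Re (?M $ i $ j)" for i j
  proof -
    let ?y = "(\<chi> p. u j $ fst p * u i $ snd p) :: complex^('d\<times>'d)"
    have e: "?M $ i $ j = (\<Sum>p\<in>UNIV. cnj (?y $ p) * (\<Sum>q\<in>UNIV. \<rho> $ p $ q * ?y $ q))"
      by (rule entry) (rule refl)
    have r: "0 \<le> Re (\<Sum>p\<in>UNIV. cnj (?y $ p) * (\<Sum>q\<in>UNIV. \<rho> $ p $ q * ?y $ q))"
      using psd unfolding cmat_psd_def by blast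
    have m: "Im (\<Sum>p\<in>UNIV. cnj (?y $ p) * (\<Sum>q\<in>UNIV. \<rho> $ p $ q * ?y $ q)) = 0"
      by (rule herm_quad_real[OF H])
    show ?thesis using e r m by simp
  qed
  then show ?thesis unfolding DNN_def using cong_psd[OF ppsd] by blast
qed

end
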